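(* For every positive integer $r$ and every graph $G$, if $\widetilde G$ is the graph obtained from $G$ by subdividing every edge $r$ times, then $\mathrm{cop}(\widetilde G)\le \mathrm{cop}(G)+1$.
   Context: All graphs are finite, undirected, without loops or multiple edges. Subdividing an edge $uv$ $r$ times means replacing it by a path from $u$ to $v$ with $r$ new internal vertices. Cops and Robber game on a connected graph: for an integer $k\ge 1$, the cop player places $k$ cops on (not necessarily distinct) vertices, then the robber is placed on a vertex; then, starting with the cops, the players alternate moves. In a cop move, each cop either stays or moves to an adjacent vertex; in a robber move, the robber stays or moves to an adjacent vertex. The cops win if at some point a cop and the robber occupy the same vertex. Both players have complete information. The cop number $\mathrm{cop}(G)$ of a connected graph $G$ is the smallest $k$ such that the cops have a winning strategy with $k$ cops; for a non-connected graph it is the maximum cop number of its connected components. *)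

theory Defs
  imports Main
begin

definition graph :: "'a set \<Rightarrow> ('a \<Rightarrow> 'a \<Rightarrow> bool) \<Rightarrow> bool" where
  "graph V E \<longleftrightarrow> finite V \<and> (\<forall>x y. E x y \<longrightarrow> x \<in> V \<and> y \<in> V)
     \<and> (\<forall>x y. E x y \<longrightarrow> E y x) \<and> (\<forall>x. \<not> E x x)"

definition restrict_edges :: "('a \<Rightarrow> 'a \<Rightarrow> bool) \<Rightarrow> 'a set \<Rightarrow> 'a \<Rightarrow> 'a \<Rightarrow> bool" where
  "restrict_edges E C x y \<longleftrightarrow> E x y \<and> x \<in> C \<and> y \<in> C"

definition component :: "('a \<Rightarrow> 'a \<Rightarrow> bool) \<Rightarrow> 'a \<Rightarrow> 'a set" where
  "component E x = {y. E\<^sup>*\<^sup>* x y}"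

definition components :: "'a set \<Rightarrow> ('a \<Rightarrow> 'a \<Rightarrow> bool) \<Rightarrow> 'a set set" where
  "components V E = {component E x | x. x \<in> V}"

definition cop_move :: "('a \<Rightarrow> 'a \<Rightarrow> bool) \<Rightarrow> 'a list \<Rightarrow> 'a list \<Rightarrow> bool" where
  "cop_move E cs cs' \<longleftrightarrow> length cs' = length cs \<and>
     (\<forall>i < length cs. cs' ! i = cs ! i \<or> E (cs ! i) (cs' ! i))"

definition robber_move :: "('a \<Rightarrow> 'a \<Rightarrow> bool) \<Rightarrow> 'a \<Rightarrow> 'a \<Rightarrow> bool" where
  "robber_move E r r' \<longleftrightarrow> r' = r \<or> E r r'"

text \<open>cops_force E cs r: in the position where the cops stand at cs, the robber
stands at r (not yet caught) and it is the cops' turn, the cops have a strategy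
that forces capture (least fixed point = attractor of the reachability game).\<close>

inductive cops_force :: "('a \<Rightarrow> 'a \<Rightarrow> bool) \<Rightarrow> 'a list \<Rightarrow> 'a \<Rightarrow> bool" for E where
  step: "cop_move E cs cs' \<Longrightarrow>
     (r \<in> set cs' \<or> (\<forall>r'. robber_move E r r' \<longrightarrow> r' \<in> set cs' \<or> cops_force E cs' r'))
     \<Longrightarrow> cops_force E cs r"

text \<open>k cops win on (V,E): they choose initial positions, then the robber chooses
his vertex (being caught immediately if it is a cop's vertex), then cops move first.\<close>

definition cops_win :: "'a set \<Rightarrow> ('a \<Rightarrow> 'a \<Rightarrow> bool) \<Rightarrow> nat \<Rightarrow> bool" where
  "cops_win V E k \<longleftrightarrow> (\<exists>cs. length cs = k \<and> set cs \<subseteq> V \<and>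
      (\<forall>r \<in> V. r \<in> set cs \<or> cops_force E cs r))"

definition cop_number_conn :: "'a set \<Rightarrow> ('a \<Rightarrow> 'a \<Rightarrow> bool) \<Rightarrow> nat" where
  "cop_number_conn V E = (LEAST k. 1 \<le> k \<and> cops_win V E k)"

definition cop_number :: "'a set \<Rightarrow> ('a \<Rightarrow> 'a \<Rightarrow> bool) \<Rightarrow> nat" where
  "cop_number V E = Max (insert 0
     {cop_number_conn C (restrict_edges E C) | C. C \<in> components V E})"

text \<open>The i-th internal vertex (1 \<le> i \<le> r, counted from u) of the path replacing
edge uv; it coincides with the (r+1-i)-th internal vertex counted from v.\<close>

definition sd_vertex :: "nat \<Rightarrow> 'a \<Rightarrow> 'a \<Rightarrow> nat \<Rightarrow> ('a \<times> 'a \<times> nat) set" where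
  "sd_vertex r u v i = {(u, v, i), (v, u, r + 1 - i)}"

definition subdiv_V :: "nat \<Rightarrow> 'a set \<Rightarrow> ('a \<Rightarrow> 'a \<Rightarrow> bool) \<Rightarrow> ('a + ('a \<times> 'a \<times> nat) set) set" where
  "subdiv_V r V E = Inl ` V \<union> {Inr (sd_vertex r u v i) | u v i. E u v \<and> 1 \<le> i \<and> i \<le> r}"

definition subdiv_step :: "nat \<Rightarrow> ('a \<Rightarrow> 'a \<Rightarrow> bool) \<Rightarrow>
    ('a + ('a \<times> 'a \<times> nat) set) \<Rightarrow> ('a + ('a \<times> 'a \<times> nat) set) \<Rightarrow> bool" where
  "subdiv_step r E x y \<longleftrightarrow> (\<exists>u v. E u v \<and>
      ((x = Inl u \<and> y = Inr (sd_vertex r u v 1)) \<or>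
       (\<exists>i. 1 \<le> i \<and> i < r \<and> x = Inr (sd_vertex r u v i) \<and> y = Inr (sd_vertex r u v (Suc i)))))"

definition subdiv_E :: "nat \<Rightarrow> ('a \<Rightarrow> 'a \<Rightarrow> bool) \<Rightarrow>
    ('a + ('a \<times> 'a \<times> nat) set) \<Rightarrow> ('a + ('a \<times> 'a \<times> nat) set) \<Rightarrow> bool" where
  "subdiv_E r E x y \<longleftrightarrow> subdiv_step r E x y \<or> subdiv_step r E y x"

end

theory Submission
  imports Defs
begin

fun walk :: "('b \<Rightarrow> 'b \<Rightarrow> bool) \<Rightarrow> 'b list \<Rightarrow> bool" where
  "walk R [] = True" | "walk R [x] = True" | "walk R (x#y#xs) = (R x y \<and> walk R (y#xs))"

lemma walk_tl: "walk R xs \<Longrightarrow> walk R (tl xs)"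
  by (induction R xs rule: walk.induct) auto

lemma walk_snoc: "walk R xs \<Longrightarrow> xs \<noteq> [] \<Longrightarrow> R (last xs) z \<Longrightarrow> walk R (xs @ [z])"
  by (induction R xs rule: walk.induct) auto

lemma walk_butlast: "walk R xs \<Longrightarrow> walk R (butlast xs)"
proof (induction R xs rule: walk.induct)
  case (3 R x y xs) then show ?case by (cases xs) auto
qed auto

lemma walk_nth: "walk R xs \<Longrightarrow> Suc i < length xs \<Longrightarrow> R (xs!i) (xs!Suc i)"
proof (induction R xs arbitrary: i rule: walk.induct)
  case (3 R x y xs)
  then show ?case by (cases i) auto
qed auto

lemma walk_rtranclp: "R\<^sup>*\<^sup>* a b \<Longrightarrow> \<exists>ws. walk R ws \<and> ws \<noteq> [] \<and> hd ws = a \<and> last ws = b"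
proof (induction rule: rtranclp_induct)
  case base
  then show ?case by (intro exI[of _ "[a]"]) auto
next
  case (step y z)
  then obtain ws where "walk R ws" "ws \<noteq> []" "hd ws = a" "last ws = y" by blast
  then show ?case using walk_snoc[of R ws z] step by (intro exI[of _ "ws @ [z]"]) auto
qed

lemma cop_move_Cons: "cop_move R (c#fs) (c'#fs') \<longleftrightarrow> ((c' = c \<or> R c c') \<and> cop_move R fs fs')"
  unfolding cop_move_def by (auto simp: less_Suc_eq_0_disj)

locale subdiv_game =
  fixes E :: "'a \<Rightarrow> 'a \<Rightarrow> bool" and r :: nat
  assumes Esym: "E x y \<Longrightarrow> E y x" and r1: "1 \<le> r"
begin

abbreviation F where "F \<equiv> subdiv_E r E"

definition pos :: "'a \<Rightarrow> 'a \<Rightarrow> nat \<Rightarrow> 'a + ('a \<times> 'a \<times> nat) set" where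
  "pos u v i = (if i = 0 then Inl u else if i \<le> r then Inr (sd_vertex r u v i) else Inl v)"

lemma pos_0[simp]: "pos u v 0 = Inl u" by (simp add: pos_def)
lemma pos_L[simp]: "pos u v (Suc r) = Inl v" by (simp add: pos_def)

lemma pos_sym: "i \<le> Suc r \<Longrightarrow> pos u v i = pos v u (Suc r - i)"
  unfolding pos_def sd_vertex_def by (auto simp: insert_commute)

lemma F_sym: "F a b \<Longrightarrow> F b a"
  unfolding subdiv_E_def by auto

lemma F_intro: assumes "E x z" "i < Suc r" shows "F (pos x z i) (pos x z (Suc i))"
proof -
  consider "i = 0" | "1 \<le> i" "i < r" | "i = r" using assms by linarith
  then show ?thesis
  proof cases
    case 1 then show ?thesis using assms r1 unfolding subdiv_E_def subdiv_step_def pos_def by auto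
  next
    case 2 then show ?thesis using assms r1 unfolding subdiv_E_def subdiv_step_def pos_def by auto
  next
    case 3
    have "sd_vertex r z x 1 = sd_vertex r x z r" unfolding sd_vertex_def by auto
    then show ?thesis using assms r1 3 Esym[OF assms(1)] unfolding subdiv_E_def subdiv_step_def pos_def
      by (auto intro!: exI[of _ z] exI[of _ x])
  qed
qed

lemma step_cases: assumes "subdiv_step r E a b"
  shows "\<exists>x z i. E x z \<and> i < Suc r \<and> a = pos x z i \<and> b = pos x z (Suc i)"
proof -
  obtain u v where uv: "E u v" and h: "(a = Inl u \<and> b = Inr (sd_vertex r u v 1)) \<or>
         (\<exists>i. 1 \<le> i \<and> i < r \<and> a = Inr (sd_vertex r u v i) \<and> b = Inr (sd_vertex r u v (Suc i)))"
    using assms unfolding subdiv_step_def by blast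
  from h show ?thesis
  proof (elim disjE exE conjE)
    assume "a = Inl u" "b = Inr (sd_vertex r u v 1)"
    then show ?thesis using uv r1 by (intro exI[of _ u] exI[of _ v] exI[of _ 0]) (auto simp: pos_def)
  next
    fix i assume "1 \<le> i" "i < r" "a = Inr (sd_vertex r u v i)" "b = Inr (sd_vertex r u v (Suc i))"
    then show ?thesis using uv r1 by (intro exI[of _ u] exI[of _ v] exI[of _ i]) (auto simp: pos_def)
  qed
qed

lemma F_cases: assumes "F a b"
  shows "\<exists>x z i. E x z \<and> i < Suc r \<and> a = pos x z i \<and> b = pos x z (Suc i)"
proof -
  have "subdiv_step r E a b \<or> subdiv_step r E b a" using assms unfolding subdiv_E_def by auto
  then show ?thesis
  proof
    assume "subdiv_step r E a b" then show ?thesis by (rule step_cases)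
  next
    assume "subdiv_step r E b a"
    then obtain x z i where h: "E x z" "i < Suc r" "b = pos x z i" "a = pos x z (Suc i)"
      using step_cases by blast
    then have "a = pos z x (Suc r - Suc i)" "b = pos z x (Suc (Suc r - Suc i))"
      using pos_sym[of "Suc i" x z] pos_sym[of i x z] h(2) by (auto simp: Suc_diff_Suc Suc_diff_le)
    then show ?thesis using Esym[OF h(1)] h(2) by (intro exI[of _ z] exI[of _ x] exI[of _ "Suc r - Suc i"]) auto
  qed
qed

end

context subdiv_game begin

lemma pos_interior: "1 \<le> i \<Longrightarrow> i \<le> r \<Longrightarrow> pos x z i = Inr (sd_vertex r x z i)"
  by (simp add: pos_def)

lemma pos_inj_interior:
  assumes "1 \<le> i" "i \<le> r" "j \<le> Suc r" "pos x z i = pos x' z' j"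
  shows "(x' = x \<and> z' = z \<and> j = i) \<or> (x' = z \<and> z' = x \<and> j = Suc r - i)"
proof -
  have li: "pos x z i = Inr (sd_vertex r x z i)" using assms(1,2) by (simp add: pos_def)
  have j: "1 \<le> j \<and> j \<le> r"
  proof (rule ccontr)
    assume "\<not> (1 \<le> j \<and> j \<le> r)"
    then have "j = 0 \<or> r < j" by auto
    then have "\<exists>t. pos x' z' j = Inl t" unfolding pos_def by auto
    then show False using li assms(4) by auto
  qed
  then have "sd_vertex r x z i = sd_vertex r x' z' j" using assms li by (simp add: pos_def)
  moreover have "(x, z, i) \<in> sd_vertex r x z i" unfolding sd_vertex_def by simp
  ultimately have "(x, z, i) \<in> sd_vertex r x' z' j" by simp
  then have "(x, z, i) = (x', z', j) \<or> (x, z, i) = (z', x', r + 1 - j)" unfolding sd_vertex_def by simp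
  then show ?thesis using j assms(1,2) by auto
qed

lemma nbr_interior: assumes "1 \<le> i" "i \<le> r" "F (pos x z i) b"
  shows "b = pos x z (i - 1) \<or> b = pos x z (Suc i)"
proof -
  obtain x' z' j where h: "E x' z'" "j < Suc r" "pos x z i = pos x' z' j" "b = pos x' z' (Suc j)"
    using F_cases[OF assms(3)] by blast
  from pos_inj_interior[OF assms(1,2) _ h(3)] h(2)
  have "(x' = x \<and> z' = z \<and> j = i) \<or> (x' = z \<and> z' = x \<and> j = Suc r - i)" by simp
  then show ?thesis
  proof
    assume "x' = x \<and> z' = z \<and> j = i" then show ?thesis using h by simp
  next
    assume a: "x' = z \<and> z' = x \<and> j = Suc r - i"
    have "pos z x (Suc (Suc r - i)) = pos x z (Suc r - Suc (Suc r - i))"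
      using pos_sym[of "Suc (Suc r - i)" z x] assms(1) by simp
    also have "Suc r - Suc (Suc r - i) = i - 1" using assms(1,2) by simp
    finally show ?thesis using h a by simp
  qed
qed

lemma nbr_branch: assumes "F (Inl z) b" shows "\<exists>w. E z w \<and> b = pos z w 1"
proof -
  obtain x' z' j where h: "E x' z'" "j < Suc r" "Inl z = pos x' z' j" "b = pos x' z' (Suc j)"
    using F_cases[OF assms] by blast
  have "j = 0" using h(2,3) by (auto simp: pos_def split: if_splits)
  then show ?thesis using h by (auto simp: pos_def split: if_splits)
qed

lemma pos_eq_ends: assumes "i \<le> Suc r" "j \<le> Suc r" "pos x y i = pos u v j"
  shows "x = u \<or> x = v \<or> y = u \<or> y = v"
proof -
  have A: "pos x y i = Inl x \<or> pos x y i = Inl y \<or> (1 \<le> i \<and> i \<le> r \<and> pos x y i = Inr (sd_vertex r x y i))"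
    unfolding pos_def by auto
  have B: "pos u v j = Inl u \<or> pos u v j = Inl v \<or> (1 \<le> j \<and> j \<le> r \<and> pos u v j = Inr (sd_vertex r u v j))"
    unfolding pos_def by auto
  show ?thesis
  proof (cases "\<exists>t. pos x y i = Inl t")
    case True
    then obtain t where t: "pos x y i = Inl t" by blast
    then have "t = x \<or> t = y" using A by auto
    moreover have "t = u \<or> t = v" using B t assms(3) by auto
    ultimately show ?thesis by blast
  next
    case False
    then have a: "pos x y i = Inr (sd_vertex r x y i)" using A by auto
    then have b: "pos u v j = Inr (sd_vertex r u v j)" using B assms(3) by auto
    have "(x, y, i) \<in> sd_vertex r u v j" using a b assms(3) unfolding sd_vertex_def by simp
    then show ?thesis unfolding sd_vertex_def by auto
  qed
qed


lemma lift_edge: assumes "E u v" shows "F\<^sup>*\<^sup>* (Inl u) (pos u v j)"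
proof (induction j)
  case 0 then show ?case by simp
next
  case (Suc j)
  show ?case
  proof (cases "j < Suc r")
    case True then show ?thesis using Suc F_intro[OF assms True] by (meson rtranclp.rtrancl_into_rtrancl)
  next
    case False
    then have "pos u v (Suc j) = pos u v j" by (simp add: pos_def)
    then show ?thesis using Suc by simp
  qed
qed

lemma lift_E: "E\<^sup>*\<^sup>* u v \<Longrightarrow> F\<^sup>*\<^sup>* (Inl u) (Inl v)"
proof (induction rule: rtranclp_induct)
  case (step y z)
  then show ?case using lift_edge[OF step(2), of "Suc r"] by simp
qed simp

lemma F_rtranclp_sym: "F\<^sup>*\<^sup>* a b \<Longrightarrow> F\<^sup>*\<^sup>* b a"
proof (induction rule: rtranclp_induct)
  case (step y z)
  then show ?case using F_sym[OF step(2)] by (meson converse_rtranclp_into_rtranclp)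
qed simp

lemma cop_move_mv:
  assumes "cop_move E cs cs'" "j < Suc r"
  shows "cop_move F (map2 (\<lambda>u u'. if u = u' then Inl u else pos u u' j) cs cs')
                    (map2 (\<lambda>u u'. if u = u' then Inl u else pos u u' (Suc j)) cs cs')"
proof -
  have len: "length cs' = length cs" using assms(1) unfolding cop_move_def by simp
  show ?thesis unfolding cop_move_def
  proof (intro conjI allI impI)
    fix i assume "i < length (map2 (\<lambda>u u'. if u = u' then Inl u else pos u u' j) cs cs')"
    then have i: "i < length cs" using len by simp
    then have "cs' ! i = cs ! i \<or> E (cs ! i) (cs' ! i)" using assms(1) unfolding cop_move_def by simp
    then show "map2 (\<lambda>u u'. if u = u' then Inl u else pos u u' (Suc j)) cs cs' ! i =
         map2 (\<lambda>u u'. if u = u' then Inl u else pos u u' j) cs cs' ! i \<or>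
         F (map2 (\<lambda>u u'. if u = u' then Inl u else pos u u' j) cs cs' ! i)
          (map2 (\<lambda>u u'. if u = u' then Inl u else pos u u' (Suc j)) cs cs' ! i)"
      using i len F_intro[OF _ assms(2)] by auto
  qed (use len in simp)
qed

lemma mv_0: "length cs = length cs' \<Longrightarrow> map2 (\<lambda>u u'. if u = u' then Inl u else pos u u' 0) cs cs' = map Inl cs"
  by (induction cs cs' rule: list_induct2) auto
lemma mv_L: "length cs = length cs' \<Longrightarrow> map2 (\<lambda>u u'. if u = u' then Inl u else pos u u' (Suc r)) cs cs' = map Inl cs'"
  by (induction cs cs' rule: list_induct2) auto

end

locale game = subdiv_game +
  fixes v0 :: 'a and k :: nat and cs0 :: "'a list"
  assumes len0: "length cs0 = k" and cs0C: "\<forall>u\<in>set cs0. E\<^sup>*\<^sup>* v0 u"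
    and Gwin: "\<forall>\<rho>. E\<^sup>*\<^sup>* v0 \<rho> \<longrightarrow> \<rho> \<in> set cs0 \<or> cops_force E cs0 \<rho>"
begin

definition Reach where "Reach q \<longleftrightarrow> F\<^sup>*\<^sup>* (Inl v0) q"

lemma Reach_step: "Reach p \<Longrightarrow> F p q \<Longrightarrow> Reach q"
  unfolding Reach_def by (rule rtranclp.rtrancl_into_rtrancl)

lemma Reach_cop_move: "cop_move F fs fs' \<Longrightarrow> \<forall>p\<in>set fs. Reach p \<Longrightarrow> \<forall>p\<in>set fs'. Reach p"
proof
  fix p assume cm: "cop_move F fs fs'" and R: "\<forall>p\<in>set fs. Reach p" and p: "p \<in> set fs'"
  then obtain i where i: "i < length fs'" "p = fs' ! i" by (auto simp: in_set_conv_nth)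
  then have i': "i < length fs" using cm unfolding cop_move_def by simp
  then have "Reach (fs ! i)" using R by simp
  moreover have "fs' ! i = fs ! i \<or> F (fs ! i) (fs' ! i)" using cm i' unfolding cop_move_def by simp
  ultimately show "Reach p" using i Reach_step by auto
qed

definition St where "St m ws c rob frees \<longleftrightarrow> walk F ws \<and> ws \<noteq> [] \<and> length ws = m \<and> hd ws = c
   \<and> last ws = rob \<and> length frees = k \<and> (\<forall>p\<in>set frees. Reach p) \<and> Reach rob"

definition IHm where "IHm m \<longleftrightarrow> (\<forall>m' < m. \<forall>ws c rob frees. St m' ws c rob frees \<longrightarrow> cops_force F (c # frees) rob)"

lemma turn:
  assumes IH: "IHm m" and st: "St m ws c rob frees"
    and cm: "cop_move F frees frees'"
    and cont: "\<And>r'. 3 \<le> m \<Longrightarrow> F rob r' \<Longrightarrow> r' \<noteq> rob \<Longrightarrow> r' \<noteq> ws!(m-2) \<Longrightarrow> r' \<notin> set (ws!1 # frees')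
       \<Longrightarrow> rob \<notin> set frees' \<Longrightarrow> St m (tl ws @ [r']) (ws!1) r' frees' \<Longrightarrow> (tl ws @ [r'])!(m-2) = rob
       \<Longrightarrow> cops_force F (ws!1 # frees') r'"
  shows "cops_force F (c # frees) rob"
proof -
  have w: "walk F ws" "ws \<noteq> []" "length ws = m" "hd ws = c" "last ws = rob" "length frees = k"
    "\<forall>p\<in>set frees. Reach p" "Reach rob" using st unfolding St_def by auto
  have Rf': "\<forall>p\<in>set frees'. Reach p" using Reach_cop_move[OF cm w(7)] .
  have lf': "length frees' = k" using cm w(6) unfolding cop_move_def by simp
  have m1: "1 \<le> m" using w(2,3) by (cases ws) auto
  consider "m = 1" | "m = 2" | "3 \<le> m"
  proof -
    have "m = 1 \<or> m = 2 \<or> 3 \<le> m" using m1 by linarith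
    then show ?thesis using that by blast
  qed
  then show ?thesis
  proof cases
    case 1
    then obtain c0 where "ws = [c0]" using w(3) by (cases ws) auto
    then have "rob = c" using w by simp
    show ?thesis
    proof (rule cops_force.step[of _ _ "c # frees'"])
      show "cop_move F (c # frees) (c # frees')" using cm by (simp add: cop_move_Cons)
    qed (rule disjI1, simp add: \<open>rob = c\<close>)
  next
    case 2
    then obtain a b where ws: "ws = [a, b]" using w(3) by (cases ws; cases "tl ws") auto
    then have "F c rob" using w by simp
    show ?thesis
    proof (rule cops_force.step[of _ _ "rob # frees'"])
      show "cop_move F (c # frees) (rob # frees')" using cm \<open>F c rob\<close> by (simp add: cop_move_Cons)
    qed (rule disjI1, simp)
  next
    case 3
    obtain ws1 where ws1: "ws = c # ws1" using w(2,4) by (cases ws) auto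
    have l1: "length ws1 = m - 1" using ws1 w(3) by simp
    then have ne1: "ws1 \<noteq> []" using 3 by auto
    have c': "ws ! 1 = hd ws1" using ws1 ne1 by (simp add: hd_conv_nth)
    have Fcc: "F c (hd ws1)" using w(1) ws1 ne1 by (cases ws1) auto
    have wk1: "walk F ws1" using walk_tl[OF w(1)] ws1 by simp
    have last1: "last ws1 = rob" using w(5) ws1 ne1 by simp
    have pen: "ws ! (m-2) = ws1 ! (m - 3)" using ws1 3 by (simp add: numeral_3_eq_3 Suc_diff_Suc)
    show ?thesis
    proof (rule cops_force.step[of _ _ "hd ws1 # frees'"])
      show "cop_move F (c # frees) (hd ws1 # frees')" using cm Fcc by (simp add: cop_move_Cons)
    next
      show "rob \<in> set (hd ws1 # frees') \<or> (\<forall>r'. robber_move F rob r' \<longrightarrow> r' \<in> set (hd ws1 # frees') \<or> cops_force F (hd ws1 # frees') r')"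
      proof (cases "rob \<in> set frees'")
        case True then show ?thesis by simp
      next
        case robf: False
        show ?thesis
        proof (rule disjI2, intro allI impI)
          fix r' assume rm: "robber_move F rob r'"
          show "r' \<in> set (hd ws1 # frees') \<or> cops_force F (hd ws1 # frees') r'"
          proof (cases "r' \<in> set (hd ws1 # frees')")
            case True then show ?thesis by simp
          next
            case notin: False
            show ?thesis
            proof (cases "r' = rob")
              case True
              have "St (m - 1) ws1 (hd ws1) rob frees'"
                unfolding St_def using wk1 ne1 l1 last1 lf' Rf' w(8) by auto
              moreover have "m - 1 < m" using 3 by simp
              ultimately have "cops_force F (hd ws1 # frees') rob" using IH unfolding IHm_def by blast
              then show ?thesis using True by simp
            next
              case nr: False
              then have Fr: "F rob r'" using rm unfolding robber_move_def by simp
              show ?thesis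
              proof (cases "r' = ws1 ! (m - 3)")
                case True
                let ?ws2 = "butlast ws1"
                have l2: "length ?ws2 = m - 2" using l1 by simp
                have ne2: "?ws2 \<noteq> []"
                proof
                  assume "?ws2 = []" then have "length ?ws2 = 0" by simp
                  with l2 3 show False by simp
                qed
                have "hd ?ws2 = ?ws2 ! 0" using ne2 by (simp add: hd_conv_nth)
                also have "\<dots> = ws1 ! 0" using l1 3 by (simp add: nth_butlast)
                also have "\<dots> = hd ws1" using ne1 by (simp add: hd_conv_nth)
                finally have "hd ?ws2 = hd ws1" .
                moreover have "last ?ws2 = r'"
                proof -
                  have "last ?ws2 = ?ws2 ! (m - 3)" using ne2 l2 by (simp add: last_conv_nth numeral_3_eq_3 numeral_2_eq_2)
                  also have "\<dots> = ws1 ! (m - 3)" using l1 3 by (simp add: nth_butlast)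
                  finally show ?thesis using True by simp
                qed
                moreover have "St (m - 2) ?ws2 (hd ?ws2) r' frees'"
                  unfolding St_def using walk_butlast[OF wk1] ne2 l2 lf' Rf' Reach_step[OF w(8) Fr] calculation
                  by auto
                moreover have "m - 2 < m" using 3 by simp
                ultimately have "cops_force F (hd ws1 # frees') r'" using IH unfolding IHm_def by auto
                then show ?thesis by simp
              next
                case False
                let ?ws3 = "ws1 @ [r']"
                have "St m ?ws3 (hd ws1) r' frees'"
                  unfolding St_def using walk_snoc[OF wk1 ne1] last1 Fr l1 3 lf' Rf' Reach_step[OF w(8) Fr] ne1
                  by auto
                moreover have "?ws3 ! (m-2) = rob"
                proof -
                  have "m - 2 < length ws1" using l1 3 by simp
                  then have "?ws3 ! (m-2) = ws1 ! (m-2)" by (rule nth_append_left)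
                  also have "\<dots> = last ws1" using l1 ne1 3 by (simp add: last_conv_nth numeral_2_eq_2)
                  finally show ?thesis using last1 by simp
                qed
                moreover have "r' \<noteq> ws ! (m - 2)" using pen False by simp
                moreover have "tl ws = ws1" using ws1 by simp
                ultimately have "cops_force F (ws!1 # frees') r'"
                  using cont[of r'] 3 Fr nr notin robf c' by metis
                then show ?thesis using c' by simp
              qed
            qed
          qed
        qed
      qed
    qed
  qed
qed

end

lemma cop_move_refl: "cop_move R xs xs"
  unfolding cop_move_def by simp

lemma cf_caught: "rob \<in> set cs \<Longrightarrow> cops_force R cs rob"
  by (rule cops_force.step[of _ _ cs]) (auto simp: cop_move_refl)

context game begin

lemma Good: "Reach q \<Longrightarrow> q = pos x y i \<Longrightarrow> E x y \<Longrightarrow> i \<le> Suc r \<Longrightarrow> E\<^sup>*\<^sup>* v0 x"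
proof -
  have "F\<^sup>*\<^sup>* (Inl v0) q \<Longrightarrow> (\<forall>x y i. q = pos x y i \<longrightarrow> E x y \<longrightarrow> i \<le> Suc r \<longrightarrow> E\<^sup>*\<^sup>* v0 x)"
  proof (induction rule: rtranclp_induct)
    case base
    show ?case
    proof (intro allI impI)
      fix x y i assume h: "Inl v0 = pos x y i" "E x y" "i \<le> Suc r"
      have "pos x y i = pos v0 v0 0" using h(1) by simp
      from pos_eq_ends[OF h(3) _ this] have "x = v0 \<or> x = v0 \<or> y = v0 \<or> y = v0" by simp
      then have "x = v0 \<or> y = v0" by blast
      then show "E\<^sup>*\<^sup>* v0 x"
      proof
        assume "y = v0" then show ?thesis using Esym[OF h(2)] by (simp add: r_into_rtranclp)
      qed simp
    qed
  next
    case (step a b)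
    obtain u v j where uv: "E u v" "j < Suc r" "a = pos u v j" "b = pos u v (Suc j)"
      using F_cases[OF step(2)] by blast
    have jl: "j \<le> Suc r" using uv(2) by simp
    have eu: "E\<^sup>*\<^sup>* v0 u" by (rule step(3)[rule_format, OF uv(3) uv(1) jl])
    have "a = pos v u (Suc r - j)" using pos_sym[of j u v] uv by simp
    have jl2: "Suc r - j \<le> Suc r" by simp
    have ev: "E\<^sup>*\<^sup>* v0 v" by (rule step(3)[rule_format, OF \<open>a = pos v u (Suc r - j)\<close> Esym[OF uv(1)] jl2])
    show ?case
    proof (intro allI impI)
      fix x y i assume h: "b = pos x y i" "E x y" "i \<le> Suc r"
      then have "pos x y i = pos u v (Suc j)" using uv by simp
      from pos_eq_ends[OF h(3) _ this] uv(2) have "x = u \<or> x = v \<or> y = u \<or> y = v" by simp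
      then show "E\<^sup>*\<^sup>* v0 x"
      proof (elim disjE)
        assume "y = u" then show ?thesis using Esym[OF h(2)] eu by (auto intro: rtranclp.rtrancl_into_rtrancl)
      next
        assume "y = v" then show ?thesis using Esym[OF h(2)] ev by (auto intro: rtranclp.rtrancl_into_rtrancl)
      qed (use eu ev in auto)
    qed
  qed
  then show "Reach q \<Longrightarrow> q = pos x y i \<Longrightarrow> E x y \<Longrightarrow> i \<le> Suc r \<Longrightarrow> E\<^sup>*\<^sup>* v0 x"
    unfolding Reach_def by blast
qed

context fixes m assumes IH: "IHm m" begin

lemma travel:
  assumes Exw: "E x w"
    and fr_move: "\<And>i. 1 \<le> i \<Longrightarrow> i \<le> r \<Longrightarrow> cop_move F (fr i) (fr (Suc i))"
    and fin: "\<And>c ws. St m ws c (pos x w (Suc r)) (fr (Suc r)) \<Longrightarrow> ws!(m-2) = pos x w r \<Longrightarrow> 2 \<le> m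
              \<Longrightarrow> cops_force F (c # fr (Suc r)) (pos x w (Suc r))"
  shows "1 \<le> i \<Longrightarrow> i \<le> Suc r \<Longrightarrow> St m ws c (pos x w i) (fr i) \<Longrightarrow> ws!(m-2) = pos x w (i-1) \<Longrightarrow> 2 \<le> m
     \<Longrightarrow> cops_force F (c # fr i) (pos x w i)"
proof -
  have "\<forall>i c ws. Suc r - i = d \<longrightarrow> 1 \<le> i \<longrightarrow> i \<le> Suc r \<longrightarrow> St m ws c (pos x w i) (fr i)
     \<longrightarrow> ws!(m-2) = pos x w (i-1) \<longrightarrow> 2 \<le> m \<longrightarrow> cops_force F (c # fr i) (pos x w i)" for d
  proof (induction d)
    case 0
    show ?case
    proof (intro allI impI)
      fix i c ws assume h: "Suc r - i = 0" "1 \<le> i" "i \<le> Suc r" "St m ws c (pos x w i) (fr i)"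
        "ws!(m-2) = pos x w (i-1)" "2 \<le> m"
      then have "i = Suc r" by simp
      then show "cops_force F (c # fr i) (pos x w i)" using fin h by simp
    qed
  next
    case (Suc d)
    show ?case
    proof (intro allI impI)
      fix n c ws assume h: "Suc r - n = Suc d" "1 \<le> n" "n \<le> Suc r" "St m ws c (pos x w n) (fr n)"
        "ws!(m-2) = pos x w (n-1)" "2 \<le> m"
      have nr: "n \<le> r" using h(1) by simp
      show "cops_force F (c # fr n) (pos x w n)"
      proof (rule turn[OF IH h(4) fr_move[OF h(2) nr]])
        fix r' assume h2: "3 \<le> m" "F (pos x w n) r'" "r' \<noteq> pos x w n" "r' \<noteq> ws ! (m - 2)"
          "St m (tl ws @ [r']) (ws ! 1) r' (fr (Suc n))" "(tl ws @ [r']) ! (m - 2) = pos x w n"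
        have "r' = pos x w (n - 1) \<or> r' = pos x w (Suc n)" using nbr_interior[OF h(2) nr h2(2)] .
        then have r': "r' = pos x w (Suc n)" using h2(4) h(5) by auto
        have "Suc r - Suc n = d" using h(1) by simp
        then show "cops_force F (ws ! 1 # fr (Suc n)) r'"
          using Suc.IH h2(5,6) r' h(6) nr by simp
      qed
    qed
  qed
  then show "1 \<le> i \<Longrightarrow> i \<le> Suc r \<Longrightarrow> St m ws c (pos x w i) (fr i) \<Longrightarrow> ws!(m-2) = pos x w (i-1) \<Longrightarrow> 2 \<le> m
     \<Longrightarrow> cops_force F (c # fr i) (pos x w i)" by blast
qed

definition Rconc where "Rconc cs w \<longleftrightarrow> (\<forall>x c ws. E x w \<longrightarrow> St m ws c (pos x w 1) (map Inl cs) \<longrightarrow>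
   ws!(m-2) = pos x w 0 \<longrightarrow> 2 \<le> m \<longrightarrow> cops_force F (c # map Inl cs) (pos x w 1))"

lemma R0: assumes "w \<in> set cs" shows "Rconc cs w"
  unfolding Rconc_def
proof (intro allI impI)
  fix x c ws assume h: "E x w" "St m ws c (pos x w 1) (map Inl cs)" "ws!(m-2) = pos x w 0" "2 \<le> m"
  show "cops_force F (c # map Inl cs) (pos x w 1)"
  proof (rule travel[of x w "\<lambda>_. map Inl cs"])
    fix c ws
    show "cops_force F (c # map Inl cs) (pos x w (Suc r))" using assms by (intro cf_caught) simp
  qed (use h r1 in \<open>auto simp: cop_move_refl\<close>)
qed

lemma branch_step:
  assumes cm: "cop_move F frees (map Inl cs2)" and st: "St m ws c (pos x z (Suc r)) frees"
    and pen: "ws!(m-2) = pos x z r" and m2: "2 \<le> m"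
    and H: "z \<in> set cs2 \<or> (\<forall>w. E z w \<longrightarrow> Reach (pos z w 1) \<longrightarrow> Rconc cs2 w)"
  shows "cops_force F (c # frees) (pos x z (Suc r))"
proof (rule turn[OF IH st cm])
  fix r' assume h: "3 \<le> m" "F (pos x z (Suc r)) r'" "r' \<noteq> ws ! (m - 2)"
    "pos x z (Suc r) \<notin> set (map Inl cs2)"
    "St m (tl ws @ [r']) (ws ! 1) r' (map Inl cs2)" "(tl ws @ [r']) ! (m - 2) = pos x z (Suc r)"
  then have nz: "z \<notin> set cs2" by auto
  obtain w where w: "E z w" "r' = pos z w 1" using nbr_branch h(2) by auto
  have "Reach r'" using h(5) unfolding St_def by simp
  then have "Rconc cs2 w" using H nz w by auto
  then show "cops_force F (ws ! 1 # map Inl cs2) r'"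
    unfolding Rconc_def using w h(5,6) m2 by auto
qed

end
end

context game begin
context fixes m assumes IH: "IHm m" begin

lemma R: assumes "w \<in> set cs \<or> cops_force E cs w" shows "Rconc m cs w"
proof -
  have "cops_force E cs w \<Longrightarrow> Rconc m cs w"
  proof (induction rule: cops_force.induct)
    case (step cs cs' w)
    have len: "length cs = length cs'" using step(1) unfolding cop_move_def by simp
    show ?case unfolding Rconc_def[OF IH]
    proof (intro allI impI)
      fix x c ws assume h: "E x w" "St m ws c (pos x w 1) (map Inl cs)" "ws!(m-2) = pos x w 0" "2 \<le> m"
      define fr where "fr i = map2 (\<lambda>u u'. if u = u' then Inl u else pos u u' (i - 1)) cs cs'" for i
      have fr1: "fr 1 = map Inl cs" unfolding fr_def using len by (induction cs cs' rule: list_induct2) auto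
      have "cops_force F (c # fr 1) (pos x w 1)"
      proof (rule travel[OF IH h(1), of fr])
        fix i :: nat assume i: "1 \<le> i" "i \<le> r"
        have e1: "i - 1 < Suc r" using i by simp
        have e2: "Suc (i - 1) = i" using i by simp
        have e3: "Suc i - 1 = i" by simp
        show "cop_move F (fr i) (fr (Suc i))"
          unfolding fr_def e3 using cop_move_mv[OF step(1) e1] unfolding e2 .
      next
        fix c ws assume h2: "St m ws c (pos x w (Suc r)) (fr (Suc r))" "ws ! (m - 2) = pos x w r" "2 \<le> m"
        have e4: "Suc r - 1 = r" by simp
        have cm: "cop_move F (fr (Suc r)) (map Inl cs')"
          using cop_move_mv[OF step(1), of r] mv_L[OF len] unfolding fr_def e4 by simp
        have H: "w \<in> set cs' \<or> (\<forall>w'. E w w' \<longrightarrow> Reach (pos w w' 1) \<longrightarrow> Rconc m cs' w')"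
        proof (cases "w \<in> set cs'")
          case False
          then have "\<forall>w'. robber_move E w w' \<longrightarrow> w' \<in> set cs' \<or> cops_force E cs' w' \<and> Rconc m cs' w'"
            using step(2) by simp
          then have "\<forall>w'. E w w' \<longrightarrow> Rconc m cs' w'"
            using R0[OF IH] unfolding robber_move_def by blast
          then show ?thesis by simp
        qed simp
        show "cops_force F (c # fr (Suc r)) (pos x w (Suc r))"
          by (rule branch_step[OF IH cm h2 H])
      qed (use h fr1 in auto)
      then show "cops_force F (c # map Inl cs) (pos x w 1)" using fr1 by simp
    qed
  qed
  then show ?thesis using assms R0[OF IH] by blast
qed

lemma W:
  assumes st: "St m ws c rob (map Inl cs0)"
  shows "cops_force F (c # map Inl cs0) rob"
proof -
  have w: "walk F ws" "length ws = m" "last ws = rob" "ws \<noteq> []" using st unfolding St_def by auto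
  show ?thesis
  proof (cases "m \<le> 1")
    case True
    show ?thesis by (rule turn[OF IH st cop_move_refl]) (use True in simp)
  next
    case False
    then have m2: "2 \<le> m" by simp
    have "F (ws ! (m-2)) (ws ! Suc (m-2))" using walk_nth[OF w(1)] w(2) m2 by simp
    moreover have "ws ! Suc (m-2) = rob" using w m2 by (simp add: last_conv_nth Suc_diff_Suc numeral_2_eq_2)
    ultimately obtain x z i0 where h: "E x z" "i0 < Suc r" "ws ! (m-2) = pos x z i0" "rob = pos x z (Suc i0)"
      using F_cases by metis
    have "cops_force F (c # map Inl cs0) (pos x z (Suc i0))"
    proof (rule travel[OF IH h(1), of "\<lambda>_. map Inl cs0"])
      fix c ws assume h2: "St m ws c (pos x z (Suc r)) (map Inl cs0)" "ws ! (m - 2) = pos x z r" "2 \<le> m"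
      have H: "z \<in> set cs0 \<or> (\<forall>w. E z w \<longrightarrow> Reach (pos z w 1) \<longrightarrow> Rconc m cs0 w)"
      proof (intro disjI2 allI impI)
        fix w assume zw: "E z w" "Reach (pos z w 1)"
        have "pos z w 1 = pos w z r" using pos_sym[of 1 z w] r1 by simp
        then have "E\<^sup>*\<^sup>* v0 w" using Good[OF zw(2) _ Esym[OF zw(1)]] by simp
        then show "Rconc m cs0 w" using Gwin R by blast
      qed
      show "cops_force F (c # map Inl cs0) (pos x z (Suc r))"
        by (rule branch_step[OF IH cop_move_refl h2 H])
    qed (use h st m2 in \<open>auto simp: cop_move_refl\<close>)
    then show ?thesis using h by simp
  qed
qed

end
end

context game begin

lemma A:
  assumes IH: "IHm m"
  shows "\<forall>frees c ws rob. St m ws c rob frees \<longrightarrow> (\<forall>i<k. \<exists>n\<le>N. (F ^^ n) (frees!i) (Inl (cs0!i)))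
           \<longrightarrow> cops_force F (c # frees) rob"
proof (induction N)
  case 0
  show ?case
  proof (intro allI impI)
    fix frees c ws rob assume st: "St m ws c rob frees" and p: "\<forall>i<k. \<exists>n\<le>0. (F ^^ n) (frees ! i) (Inl (cs0 ! i))"
    have "frees = map Inl cs0"
    proof (rule nth_equalityI)
      show "length frees = length (map Inl cs0)" using st len0 unfolding St_def by simp
    next
      fix i assume "i < length frees"
      then have "i < k" using st unfolding St_def by simp
      then show "frees ! i = map Inl cs0 ! i" using p len0 by auto
    qed
    then show "cops_force F (c # frees) rob" using W[OF IH] st by simp
  qed
next
  case (Suc N)
  show ?case
  proof (intro allI impI)
    fix frees c ws rob assume st: "St m ws c rob frees"
      and p: "\<forall>i<k. \<exists>n\<le>Suc N. (F ^^ n) (frees ! i) (Inl (cs0 ! i))"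
    have "\<forall>i<k. \<exists>q. (q = frees ! i \<or> F (frees ! i) q) \<and> (\<exists>n\<le>N. (F ^^ n) q (Inl (cs0 ! i)))"
    proof (intro allI impI)
      fix i assume "i < k"
      then obtain n where n: "n \<le> Suc N" "(F ^^ n) (frees ! i) (Inl (cs0 ! i))" using p by blast
      show "\<exists>q. (q = frees ! i \<or> F (frees ! i) q) \<and> (\<exists>n\<le>N. (F ^^ n) q (Inl (cs0 ! i)))"
      proof (cases n)
        case 0
        then show ?thesis using n by (intro exI[of _ "frees ! i"]) auto
      next
        case (Suc n')
        then obtain q where "F (frees ! i) q" "(F ^^ n') q (Inl (cs0 ! i))"
          using relpowp_Suc_D2 n(2) by metis
        then show ?thesis using n(1) Suc by (intro exI[of _ q]) auto
      qed
    qed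
    then obtain f where f: "\<forall>i<k. (f i = frees ! i \<or> F (frees ! i) (f i)) \<and> (\<exists>n\<le>N. (F ^^ n) (f i) (Inl (cs0 ! i)))"
      by metis
    let ?fr = "map f [0..<k]"
    have lk: "length frees = k" using st unfolding St_def by simp
    have cm: "cop_move F frees ?fr" unfolding cop_move_def using f lk by auto
    show "cops_force F (c # frees) rob"
    proof (rule turn[OF IH st cm])
      fix r' assume h: "St m (tl ws @ [r']) (ws ! 1) r' ?fr"
      show "cops_force F (ws ! 1 # ?fr) r'"
        using Suc.IH h f by auto
    qed
  qed
qed

theorem main_all: "St m ws c rob frees \<Longrightarrow> cops_force F (c # frees) rob"
proof (induction m arbitrary: ws c rob frees rule: less_induct)
  case (less m)
  have IH: "IHm m" unfolding IHm_def using less.IH by blast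
  have lk: "length frees = k" and R: "\<forall>p\<in>set frees. Reach p" using less.prems unfolding St_def by auto
  have "\<forall>i<k. \<exists>n. (F ^^ n) (frees!i) (Inl (cs0!i))"
  proof (intro allI impI)
    fix i assume i: "i < k"
    have "Reach (frees ! i)" using R i lk by simp
    then have a: "F\<^sup>*\<^sup>* (frees ! i) (Inl v0)" unfolding Reach_def using F_rtranclp_sym by blast
    have "E\<^sup>*\<^sup>* v0 (cs0 ! i)" using cs0C i len0 by simp
    then have "F\<^sup>*\<^sup>* (Inl v0) (Inl (cs0 ! i))" by (rule lift_E)
    then have "F\<^sup>*\<^sup>* (frees ! i) (Inl (cs0 ! i))" using a by (rule rtranclp_trans[rotated])
    then show "\<exists>n. (F ^^ n) (frees!i) (Inl (cs0!i))" by (rule rtranclp_imp_relpowp)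
  qed
  then obtain n where n: "\<forall>i<k. (F ^^ n i) (frees!i) (Inl (cs0!i))" by metis
  have "\<forall>i<k. \<exists>n'\<le>(\<Sum>j<k. n j). (F ^^ n') (frees!i) (Inl (cs0!i))"
  proof (intro allI impI)
    fix i assume "i < k"
    moreover have "n i \<le> (\<Sum>j<k. n j)" using \<open>i < k\<close> by (intro member_le_sum) auto
    ultimately show "\<exists>n'\<le>(\<Sum>j<k. n j). (F ^^ n') (frees!i) (Inl (cs0!i))" using n by blast
  qed
  then show ?case using A[OF IH] less.prems by blast
qed

end

lemma cf_unrestrict:
  assumes "cops_force (restrict_edges R C) cs \<rho>" "\<rho> \<in> C" "\<forall>x y. x \<in> C \<longrightarrow> R x y \<longrightarrow> y \<in> C"
  shows "cops_force R cs \<rho>"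
  using assms(1,2)
proof (induction rule: cops_force.induct)
  case (step cs cs' r)
  have cm: "cop_move R cs cs'" using step(1) unfolding cop_move_def restrict_edges_def by auto
  show ?case
  proof (rule cops_force.step[OF cm])
    show "r \<in> set cs' \<or> (\<forall>r'. robber_move R r r' \<longrightarrow> r' \<in> set cs' \<or> cops_force R cs' r')"
    proof (cases "r \<in> set cs'")
      case False
      then have h: "\<forall>r'. robber_move (restrict_edges R C) r r' \<longrightarrow> r' \<in> set cs' \<or>
          cops_force (restrict_edges R C) cs' r' \<and> (r' \<in> C \<longrightarrow> cops_force R cs' r')" using step(2) by simp
      have "\<forall>r'. robber_move R r r' \<longrightarrow> r' \<in> set cs' \<or> cops_force R cs' r'"
      proof (intro allI impI)
        fix r' assume rm: "robber_move R r r'"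
        then have "r' \<in> C" using step(3) assms(3) unfolding robber_move_def by auto
        moreover have "robber_move (restrict_edges R C) r r'"
          using rm calculation step(3) unfolding robber_move_def restrict_edges_def by auto
        ultimately show "r' \<in> set cs' \<or> cops_force R cs' r'" using h by blast
      qed
      then show ?thesis by simp
    qed simp
  qed
qed

lemma cf_restrict:
  assumes "cops_force R cs \<rho>" "set cs \<subseteq> C" "\<rho> \<in> C" "\<forall>x y. x \<in> C \<longrightarrow> R x y \<longrightarrow> y \<in> C"
  shows "cops_force (restrict_edges R C) cs \<rho>"
  using assms(1,2,3)
proof (induction rule: cops_force.induct)
  case (step cs cs' r)
  have sc: "set cs' \<subseteq> C"
  proof
    fix p assume "p \<in> set cs'"
    then obtain i where i: "i < length cs'" "p = cs' ! i" by (auto simp: in_set_conv_nth)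
    then have "i < length cs" using step(1) unfolding cop_move_def by simp
    then have "cs ! i \<in> C" using step(3) by auto
    then show "p \<in> C" using step(1) i assms(4) \<open>i < length cs\<close> unfolding cop_move_def by metis
  qed
  have cm: "cop_move (restrict_edges R C) cs cs'"
    using step(1,3) sc unfolding cop_move_def restrict_edges_def by (auto simp: subset_iff)
  show ?case
  proof (rule cops_force.step[OF cm])
    show "r \<in> set cs' \<or> (\<forall>r'. robber_move (restrict_edges R C) r r' \<longrightarrow> r' \<in> set cs' \<or> cops_force (restrict_edges R C) cs' r')"
    proof (cases "r \<in> set cs'")
      case False
      then have h: "\<forall>r'. robber_move R r r' \<longrightarrow> r' \<in> set cs' \<or>
          cops_force R cs' r' \<and> (set cs' \<subseteq> C \<longrightarrow> r' \<in> C \<longrightarrow> cops_force (restrict_edges R C) cs' r')" using step(2) by simp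
      have "\<forall>r'. robber_move (restrict_edges R C) r r' \<longrightarrow> r' \<in> set cs' \<or> cops_force (restrict_edges R C) cs' r'"
      proof (intro allI impI)
        fix r' assume rm: "robber_move (restrict_edges R C) r r'"
        then have "r' \<in> C" "robber_move R r r'" using step(4) unfolding robber_move_def restrict_edges_def by auto
        then show "r' \<in> set cs' \<or> cops_force (restrict_edges R C) cs' r'" using h sc by blast
      qed
      then show ?thesis by simp
    qed simp
  qed
qed

lemma conn_win_bound:
  fixes E :: "'a \<Rightarrow> 'a \<Rightarrow> bool" and r :: nat and v0 :: 'a
  assumes G: "graph V E" and r1: "1 \<le> r" and v0: "v0 \<in> V"
  shows "cop_number_conn (component (subdiv_E r E) (Inl v0)) (restrict_edges (subdiv_E r E) (component (subdiv_E r E) (Inl v0)))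
         \<le> cop_number_conn (component E v0) (restrict_edges E (component E v0)) + 1"
proof -
  have Esym: "\<And>x y. E x y \<Longrightarrow> E y x" and EV: "\<And>x y. E x y \<Longrightarrow> y \<in> V" and fin: "finite V"
    using G unfolding graph_def by auto
  interpret sg: subdiv_game E r using Esym r1 by unfold_locales auto
  define C where "C = component E v0"
  define k where "k = cop_number_conn C (restrict_edges E C)"
  have CV: "C \<subseteq> V"
  proof
    fix y assume "y \<in> C"
    then have "E\<^sup>*\<^sup>* v0 y" unfolding C_def component_def by simp
    then show "y \<in> V" using v0 EV by (induction rule: rtranclp_induct) auto
  qed
  have v0C: "v0 \<in> C" unfolding C_def component_def by simp
  have Cclosed: "\<forall>x y. x \<in> C \<longrightarrow> E x y \<longrightarrow> y \<in> C"
    unfolding C_def component_def by (auto intro: rtranclp.rtrancl_into_rtrancl)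
  obtain cl where cl: "set cl = C" using finite_list finite_subset[OF CV fin] by blast
  have ex: "1 \<le> length cl \<and> cops_win C (restrict_edges E C) (length cl)"
  proof
    show "1 \<le> length cl" using cl v0C by (cases cl) auto
    show "cops_win C (restrict_edges E C) (length cl)" unfolding cops_win_def using cl by auto
  qed
  have kk: "1 \<le> k \<and> cops_win C (restrict_edges E C) k"
    unfolding k_def cop_number_conn_def by (rule LeastI[of _ "length cl"]) (rule ex)
  then obtain cs0 where cs0: "length cs0 = k" "set cs0 \<subseteq> C"
    "\<forall>\<rho>\<in>C. \<rho> \<in> set cs0 \<or> cops_force (restrict_edges E C) cs0 \<rho>"
    unfolding cops_win_def by blast
  interpret gm: game E r v0 k cs0
  proof unfold_locales
    show "length cs0 = k" by (rule cs0(1))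
    show "\<forall>u\<in>set cs0. E\<^sup>*\<^sup>* v0 u" using cs0(2) unfolding C_def component_def by auto
    show "\<forall>\<rho>. E\<^sup>*\<^sup>* v0 \<rho> \<longrightarrow> \<rho> \<in> set cs0 \<or> cops_force E cs0 \<rho>"
    proof (intro allI impI)
      fix \<rho> assume "E\<^sup>*\<^sup>* v0 \<rho>"
      then have "\<rho> \<in> C" unfolding C_def component_def by simp
      then show "\<rho> \<in> set cs0 \<or> cops_force E cs0 \<rho>" using cs0(3) cf_unrestrict[OF _ _ Cclosed] by blast
    qed
  qed
  define F where "F = subdiv_E r E"
  define Ct where "Ct = component F (Inl v0)"
  have Ctclosed: "\<forall>x y. x \<in> Ct \<longrightarrow> F x y \<longrightarrow> y \<in> Ct"
    unfolding Ct_def component_def by (auto intro: rtranclp.rtrancl_into_rtrancl)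
  have v0Ct: "Inl v0 \<in> Ct" unfolding Ct_def component_def by simp
  have win: "cops_win Ct (restrict_edges F Ct) (k + 1)"
    unfolding cops_win_def
  proof (intro exI[of _ "replicate (Suc k) (Inl v0)"] conjI ballI)
    show "length (replicate (Suc k) (Inl v0)) = k + 1" by simp
    show "set (replicate (Suc k) (Inl v0)) \<subseteq> Ct" using v0Ct by auto
  next
    fix rob assume rob: "rob \<in> Ct"
    then have Rr: "F\<^sup>*\<^sup>* (Inl v0) rob" unfolding Ct_def component_def by simp
    then obtain ws where ws: "walk F ws" "ws \<noteq> []" "hd ws = Inl v0" "last ws = rob"
      using walk_rtranclp by metis
    have "gm.St (length ws) ws (Inl v0) rob (replicate k (Inl v0))"
      unfolding gm.St_def gm.Reach_def using ws Rr F_def by auto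
    then have "cops_force F (Inl v0 # replicate k (Inl v0)) rob" using gm.main_all F_def by simp
    moreover have "set (Inl v0 # replicate k (Inl v0)) \<subseteq> Ct" using v0Ct by auto
    ultimately have "cops_force (restrict_edges F Ct) (Inl v0 # replicate k (Inl v0)) rob"
      using cf_restrict[OF _ _ rob Ctclosed] by blast
    then have "cops_force (restrict_edges F Ct) (replicate (Suc k) (Inl v0)) rob" by simp
    then show "rob \<in> set (replicate (Suc k) (Inl v0)) \<or> cops_force (restrict_edges F Ct) (replicate (Suc k) (Inl v0)) rob"
      by simp
  qed
  have "cop_number_conn Ct (restrict_edges F Ct) \<le> k + 1"
    unfolding cop_number_conn_def by (rule Least_le) (use win in simp)
  then show ?thesis unfolding Ct_def F_def k_def C_def by simp
qed

theorem proposition13: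
  fixes V :: "'a set" and E :: "'a \<Rightarrow> 'a \<Rightarrow> bool" and r :: nat
  assumes "graph V E" and "1 \<le> r"
  shows "cop_number (subdiv_V r V E) (subdiv_E r E) \<le> cop_number V E + 1"
proof -
  have Esym: "\<And>x y. E x y \<Longrightarrow> E y x" and EV: "\<And>x y. E x y \<Longrightarrow> x \<in> V" and fin: "finite V"
    using assms(1) unfolding graph_def by auto
  interpret sg: subdiv_game E r using Esym assms(2) by unfold_locales auto
  define F where "F = subdiv_E r E"
  define B where "B = cop_number V E + 1"
  have finS: "finite {cop_number_conn C (restrict_edges E C) | C. C \<in> components V E}"
  proof -
    have "components V E = component E ` V" unfolding components_def by blast
    then have "finite (components V E)" using fin by simp
    moreover have "{cop_number_conn C (restrict_edges E C) | C. C \<in> components V E}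
       = (\<lambda>C. cop_number_conn C (restrict_edges E C)) ` components V E" by blast
    ultimately show ?thesis by simp
  qed
  have bound: "x \<le> B" if x: "x \<in> {cop_number_conn C (restrict_edges F C) | C. C \<in> components (subdiv_V r V E) F}" for x
  proof -
    obtain Ct where Ct: "Ct \<in> components (subdiv_V r V E) F" "x = cop_number_conn Ct (restrict_edges F Ct)"
      using x by blast
    then obtain p where p: "p \<in> subdiv_V r V E" "Ct = component F p" unfolding components_def by blast
    have "\<exists>v0 \<in> V. F\<^sup>*\<^sup>* (Inl v0) p"
    proof -
      from p(1) consider (a) u where "u \<in> V" "p = Inl u"
        | (b) u v i where "E u v" "1 \<le> i" "i \<le> r" "p = Inr (sd_vertex r u v i)"
        unfolding subdiv_V_def by blast
      then show ?thesis
      proof cases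
        case a then show ?thesis by auto
      next
        case (b u v i)
        then have "p = sg.pos u v i" unfolding sg.pos_def by simp
        then have "F\<^sup>*\<^sup>* (Inl u) p" using sg.lift_edge[OF b(1)] F_def by simp
        then show ?thesis using EV[OF b(1)] by blast
      qed
    qed
    then obtain v0 where v0: "v0 \<in> V" "F\<^sup>*\<^sup>* (Inl v0) p" by blast
    have "Ct = component F (Inl v0)"
    proof -
      have "F\<^sup>*\<^sup>* p y \<longleftrightarrow> F\<^sup>*\<^sup>* (Inl v0) y" for y
      proof
        assume "F\<^sup>*\<^sup>* p y" then show "F\<^sup>*\<^sup>* (Inl v0) y" using v0(2) by simp
      next
        assume "F\<^sup>*\<^sup>* (Inl v0) y"
        moreover have "F\<^sup>*\<^sup>* p (Inl v0)" using sg.F_rtranclp_sym v0(2) F_def by simp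
        ultimately show "F\<^sup>*\<^sup>* p y" by simp
      qed
      then show ?thesis unfolding p(2) component_def by auto
    qed
    then have "x \<le> cop_number_conn (component E v0) (restrict_edges E (component E v0)) + 1"
      using conn_win_bound[OF assms v0(1)] Ct(2) F_def by simp
    moreover have "cop_number_conn (component E v0) (restrict_edges E (component E v0)) \<le> cop_number V E"
    proof -
      have "component E v0 \<in> components V E" unfolding components_def using v0(1) by blast
      then have "cop_number_conn (component E v0) (restrict_edges E (component E v0))
         \<in> insert 0 {cop_number_conn C (restrict_edges E C) | C. C \<in> components V E}" by blast
      then show ?thesis unfolding cop_number_def using finS by (intro Max_ge) auto
    qed
    ultimately show ?thesis unfolding B_def by simp
  qed
  have sub: "insert 0 {cop_number_conn C (restrict_edges F C) | C. C \<in> components (subdiv_V r V E) F} \<subseteq> {..B}"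
  proof
    fix x assume "x \<in> insert 0 {cop_number_conn C (restrict_edges F C) | C. C \<in> components (subdiv_V r V E) F}"
    then have "x = 0 \<or> x \<in> {cop_number_conn C (restrict_edges F C) | C. C \<in> components (subdiv_V r V E) F}"
      by (rule insertE) simp_all
    then show "x \<in> {..B}"
    proof
      assume "x \<in> {cop_number_conn C (restrict_edges F C) | C. C \<in> components (subdiv_V r V E) F}"
      from bound[OF this] show ?thesis by simp
    qed simp
  qed
  then have "finite (insert 0 {cop_number_conn C (restrict_edges F C) | C. C \<in> components (subdiv_V r V E) F})"
    by (rule finite_subset) simp
  then have "cop_number (subdiv_V r V E) F \<le> B"
    unfolding cop_number_def
  proof (rule Max.boundedI)
    fix a assume "a \<in> insert 0 {cop_number_conn C (restrict_edges F C) | C. C \<in> components (subdiv_V r V E) F}"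
    then show "a \<le> B" using sub by blast
  qed simp_all
  then show ?thesis unfolding F_def B_def .
qed


end
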